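(* Let $N(\Theta,\mathbf{X})\in\mathbb{R}^M$ be a neural network with weight vector $\Theta\in\mathbb{R}^n$, evaluated on a fixed training dataset $\mathbf{X}$ of $M$ players, whose $i$-th output $N(\Theta,\mathbf{X})_i=\hat d_i$ is the predicted required difficulty for player $i$. Let $d_1,\dots,d_M\in\mathbb{R}$ be the given (actual) difficulties, $P\in[0,1]$ a desired completion rate and $\delta\ge 0$ a tolerance. Let $\mathcal{M}\subseteq\mathbb{R}^n$ be the set of weights that are local minima of the network's training loss, and let $$\mathcal{C}=\Bigl\{\Theta\in\mathbb{R}^n : \Bigl|\tfrac{1}{M}\textstyle\sum_{i=1}^{M}\mathbb{1}[d_i\ge N(\Theta,\mathbf{X})_i]-P\Bigr|\le\delta\Bigr\},$$ where $\mathbb{1}[\cdot]$ equals $1$ if its argument is true and $0$ otherwise. Assume $\mathcal{M}$ and $\mathcal{C}$ are nonempty and define the projection operators $$\mathcal{P}_{\mathcal{M}}\Theta\in\operatorname{argmin}_{\hat\Theta\in\mathcal{M}}\|\Theta-\hat\Theta\|_2,\qquad \mathcal{P}_{\mathcal{C}}\Theta\in\operatorname{argmin}_{\hat\Theta\in\mathcal{C}}\|\Theta-\hat\Theta\|_2$$ (i.e. each returns a closest point of the respective set, assumed to exist). Starting from an arbitrary initial weight vector $\Theta_1^C$, define for $i\ge1$ the alternating scheme $$\Theta_i^M\leftarrow\mathcal{P}_{\mathcal{M}}\Theta_i^C,\qquad \Theta_{i+1}^C\leftarrow\mathcal{P}_{\mathcal{C}}\Theta_i^M.$$ Then the sequence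 of distances $\|\Theta_i^C-\Theta_i^M\|_2$ converges.
   Context: This is set in a dynamic difficulty adjustment problem: a neural network outputs a required difficulty $\hat d_i$ for each player $i$, trained to minimize a loss (the local minima of which form $\mathcal{M}$), subject to a completion rate constraint requiring that the fraction of players with $d_i\ge\hat d_i$ equal the target $P$ up to tolerance $\delta$ (the set $\mathcal{C}$). $\|\cdot\|_2$ is the Euclidean norm on weight space. *)

theory Defs
  imports "HOL-Analysis.Analysis"
begin

definition local_minima :: "('a::metric_space \<Rightarrow> real) \<Rightarrow> 'a set" where
  "local_minima L = {x. \<exists>e>0. \<forall>y. dist y x < e \<longrightarrow> L x \<le> L y}"

text \<open>Completion-rate constraint set. N th i is the i-th network output (players 1..M)
  on the fixed dataset, d i the actual difficulty of player i.\<close>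
definition completion_set ::
  "('a \<Rightarrow> nat \<Rightarrow> real) \<Rightarrow> (nat \<Rightarrow> real) \<Rightarrow> nat \<Rightarrow> real \<Rightarrow> real \<Rightarrow> 'a set" where
  "completion_set N d M P \<delta> =
     {\<Theta>. \<bar>(1 / real M) * (\<Sum>i=1..M. if d i \<ge> N \<Theta> i then 1 else 0) - P\<bar> \<le> \<delta>}"

definition is_projection :: "'a::real_normed_vector set \<Rightarrow> 'a \<Rightarrow> 'a \<Rightarrow> bool" where
  "is_projection S x p \<longleftrightarrow> is_arg_min (\<lambda>y. norm (x - y)) (\<lambda>y. y \<in> S) p"

end

theory Submission
  imports Defs
begin

theorem proposition1:
  fixes N :: "real ^ 'n \<Rightarrow> nat \<Rightarrow> real"
    and L :: "real ^ 'n \<Rightarrow> real"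
    and d :: "nat \<Rightarrow> real"
    and M :: nat and P \<delta> :: real
    and ThC ThM :: "nat \<Rightarrow> real ^ 'n"
  assumes "M > 0"
    and "0 \<le> P" "P \<le> 1" "0 \<le> \<delta>"
    and "local_minima L \<noteq> {}"
    and "completion_set N d M P \<delta> \<noteq> {}"
    and "\<And>i. i \<ge> 1 \<Longrightarrow> is_projection (local_minima L) (ThC i) (ThM i)"
    and "\<And>i. i \<ge> 1 \<Longrightarrow> is_projection (completion_set N d M P \<delta>) (ThM i) (ThC (Suc i))"
  shows "convergent (\<lambda>i. norm (ThC i - ThM i))"
proof -
  define a where "a i = norm (ThC i - ThM i)" for i
  have pM: "ThM i \<in> local_minima L \<and> (\<forall>y\<in>local_minima L. norm (ThC i - ThM i) \<le> norm (ThC i - y))"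
    if "i \<ge> 1" for i
    using assms(7)[OF that] unfolding is_projection_def is_arg_min_def by (auto simp: not_less)
  have pC: "ThC (Suc i) \<in> completion_set N d M P \<delta> \<and>
      (\<forall>y\<in>completion_set N d M P \<delta>. norm (ThM i - ThC (Suc i)) \<le> norm (ThM i - y))"
    if "i \<ge> 1" for i
    using assms(8)[OF that] unfolding is_projection_def is_arg_min_def by (auto simp: not_less)
  have step: "a (Suc (Suc n)) \<le> a (Suc n)" if "n \<ge> 1" for n
  proof -
    let ?i = "Suc n"
    have "a (Suc ?i) \<le> norm (ThC (Suc ?i) - ThM ?i)"
      using pM[of "Suc ?i"] pM[of ?i] unfolding a_def by auto
    also have "\<dots> = norm (ThM ?i - ThC (Suc ?i))" by (simp add: norm_minus_commute)
    also have "\<dots> \<le> norm (ThM ?i - ThC ?i)"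
      using pC[of ?i] pC[of n] that by auto
    also have "\<dots> = a ?i" unfolding a_def by (simp add: norm_minus_commute)
    finally show ?thesis .
  qed
  have "decseq (\<lambda>n. a (n + 2))"
    by (rule decseq_SucI) (simp add: step)
  moreover have "\<forall>i. 0 \<le> a (i + 2)" by (simp add: a_def)
  ultimately obtain l where "(\<lambda>n. a (n + 2)) \<longlonglongrightarrow> l" by (rule decseq_convergent)
  hence "convergent (\<lambda>n. a (n + 2))" by (auto simp: convergent_def)
  hence "convergent a" by (simp only: convergent_ignore_initial_segment)
  thus ?thesis unfolding a_def .
qed

end
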